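(* $\mathrm{SL}(2,\mathbb{R})$ and $\mathrm{GL}(2,\mathbb{R})$ have the topological $R_\infty$-property.
   Context: For an automorphism $\varphi$ of a group $G$, the $\varphi$-twisted conjugacy classes are the equivalence classes of the relation $x\sim_\varphi y$ iff $y=gx\varphi(g)^{-1}$ for some $g\in G$; $R(\varphi)\in\mathbb{N}\cup\{\infty\}$ is their number. A topological group $G$ has the topological $R_\infty$-property if $R(\varphi)=\infty$ for every automorphism $\varphi$ of $G$ that is a homeomorphism (for a Lie group: every continuous automorphism). *)

theory Defs
  imports "HOL-Analysis.Analysis"
begin

text \<open>Real 2x2 matrices, with the Euclidean (subspace) topology of real^2^2.\<close>

definition SL2 :: "(real^2^2) set" where
  "SL2 = {A. det A = 1}"

definition GL2 :: "(real^2^2) set" where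
  "GL2 = {A. invertible A}"

definition top_automorphism :: "(real^2^2) set \<Rightarrow> (real^2^2 \<Rightarrow> real^2^2) \<Rightarrow> bool" where
  "top_automorphism G \<phi> \<longleftrightarrow>
     (\<forall>x\<in>G. \<forall>y\<in>G. \<phi> (x ** y) = \<phi> x ** \<phi> y) \<and>
     (\<exists>\<psi>. homeomorphism G G \<phi> \<psi>)"

definition twisted_rel :: "(real^2^2) set \<Rightarrow> (real^2^2 \<Rightarrow> real^2^2) \<Rightarrow> ((real^2^2) \<times> (real^2^2)) set" where
  "twisted_rel G \<phi> = {(x, y). x \<in> G \<and> y \<in> G \<and> (\<exists>g\<in>G. y = g ** x ** matrix_inv (\<phi> g))}"

definition R_infinite :: "(real^2^2) set \<Rightarrow> (real^2^2 \<Rightarrow> real^2^2) \<Rightarrow> bool" where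
  "R_infinite G \<phi> \<longleftrightarrow> infinite (G // twisted_rel G \<phi>)"

definition top_R_infty_property :: "(real^2^2) set \<Rightarrow> bool" where
  "top_R_infty_property G \<longleftrightarrow> (\<forall>\<phi>. top_automorphism G \<phi> \<longrightarrow> R_infinite G \<phi>)"

end

theory Submission
  imports Defs
begin

definition mk :: "real \<Rightarrow> real \<Rightarrow> real \<Rightarrow> real \<Rightarrow> real^2^2" where
  "mk a b c d = (\<chi> i j. if i = 1 then (if j = 1 then a else b) else (if j = 1 then c else d))"

lemma two_ne_one[simp]: "(2::2) \<noteq> 1" by simp

lemma mk_nth[simp]: "mk a b c d $ 1 $ 1 = a" "mk a b c d $ 1 $ 2 = b"
  "mk a b c d $ 2 $ 1 = c" "mk a b c d $ 2 $ 2 = d"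
  by (simp_all add: mk_def)

lemma mat2_eq_iff: "(X::real^2^2) = Y \<longleftrightarrow> X$1$1 = Y$1$1 \<and> X$1$2 = Y$1$2 \<and> X$2$1 = Y$2$1 \<and> X$2$2 = Y$2$2"
  by (auto simp: vec_eq_iff forall_2)

lemma mk_eq[simp]: "mk a b c d = mk a' b' c' d' \<longleftrightarrow> a = a' \<and> b = b' \<and> c = c' \<and> d = d'"
  by (simp add: mat2_eq_iff)

lemma mk_surj: "(X::real^2^2) = mk (X$1$1) (X$1$2) (X$2$1) (X$2$2)"
  by (simp add: mat2_eq_iff)

lemma mk_cases: obtains a b c d where "X = mk a b c d"
  using mk_surj by blast

lemma mk_mult[simp]: "mk a b c d ** mk e f g h = mk (a*e+b*g) (a*f+b*h) (c*e+d*g) (c*f+d*h)"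
  by (simp add: mat2_eq_iff matrix_matrix_mult_def sum_2)

lemma mk_one: "mat 1 = mk 1 0 0 1"
  by (simp add: mat2_eq_iff mat_def)

lemma mk_add[simp]: "mk a b c d + mk e f g h = mk (a+e) (b+f) (c+g) (d+h)"
  by (simp add: mat2_eq_iff)
lemma mk_diff[simp]: "mk a b c d - mk e f g h = mk (a-e) (b-f) (c-g) (d-h)"
  by (simp add: mat2_eq_iff)
lemma mk_scale[simp]: "k *\<^sub>R mk a b c d = mk (k*a) (k*b) (k*c) (k*d)"
  by (simp add: mat2_eq_iff)
lemma mk_det[simp]: "det (mk a b c d) = a*d - b*c"
  by (simp add: det_2)
lemma mk_trace[simp]: "trace (mk a b c d) = a + d"
  by (simp add: trace_def sum_2)

lemma minv_unique: assumes "(A::real^2^2) ** B = mat 1" "B ** A = mat 1" shows "matrix_inv A = B"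
proof -
  have "invertible A" using assms invertible_def by blast
  then have "A ** matrix_inv A = mat 1 \<and> matrix_inv A ** A = mat 1"
    unfolding invertible_def matrix_inv_def by (rule someI_ex)
  then have h: "matrix_inv A ** A = mat 1" by simp
  have "matrix_inv A = matrix_inv A ** (A ** B)" using assms by simp
  also have "\<dots> = B" using h by (simp add: matrix_mul_assoc)
  finally show ?thesis .
qed

lemma minv_props: assumes "invertible (A::real^2^2)" shows "A ** matrix_inv A = mat 1" "matrix_inv A ** A = mat 1"
proof -
  have "A ** matrix_inv A = mat 1 \<and> matrix_inv A ** A = mat 1"
    using assms unfolding invertible_def matrix_inv_def by (rule someI_ex)
  then show "A ** matrix_inv A = mat 1" "matrix_inv A ** A = mat 1" by auto
qed

lemma mk_inv: assumes "a*d - b*c \<noteq> 0"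
  shows "matrix_inv (mk a b c d) = mk (d/(a*d-b*c)) (-b/(a*d-b*c)) (-c/(a*d-b*c)) (a/(a*d-b*c))"
proof (rule minv_unique)
  let ?D = "a*d-b*c"
  show "mk a b c d ** mk (d/?D) (-b/?D) (-c/?D) (a/?D) = mat 1"
    unfolding mk_mult mk_one mk_eq using assms by (auto simp: divide_simps; argo)
  show "mk (d/?D) (-b/?D) (-c/?D) (a/?D) ** mk a b c d = mat 1"
    unfolding mk_mult mk_one mk_eq using assms by (auto simp: divide_simps; argo)
qed

lemma inv_iff_det: "invertible (A::real^2^2) \<longleftrightarrow> det A \<noteq> 0"
  by (simp add: invertible_det_nz)

lemma tr4: "a*d - b*c = 1 \<Longrightarrow> t = a + d \<Longrightarrow>
  (let y = mk a b c d ** mk a b c d ** mk a b c d ** mk a b c d in y$1$1 + y$2$2) = t^4 - 4*t^2 + 2"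
  by (simp add: Let_def) algebra

lemma cube: "a*d - b*c = 1 \<Longrightarrow> a + d = -1 \<Longrightarrow> mk a b c d ** mk a b c d ** mk a b c d = mat 1"
  apply (simp add: mk_one) apply (intro conjI) by algebra+

lemma fifth: "a*d - b*c = 1 \<Longrightarrow> (a + d)^2 + (a+d) - 1 = 0 \<Longrightarrow>
   mk a b c d ** mk a b c d ** mk a b c d ** mk a b c d ** mk a b c d = mat 1"
  apply (simp add: mk_one) apply (intro conjI) by algebra+

lemma conj_det_tr: assumes "invertible (g::real^2^2)" "g ** x ** matrix_inv g = (y::real^2^2)"
  shows "det y = det x" "trace y = trace x"
proof -
  have i: "matrix_inv g ** g = mat 1" using minv_props[OF assms(1)] by simp
  have "det y = det g * det x * det (matrix_inv g)" using assms(2) by (metis det_mul)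
  also have "\<dots> = det x * det (matrix_inv g ** g)" by (simp add: det_mul)
  finally show "det y = det x" using i by (simp add: det_I)
  have "trace y = trace (matrix_inv g ** (g ** x))" using assms(2) trace_mul_sym by metis
  then show "trace y = trace x" using i by (simp add: matrix_mul_assoc)
qed

lemma unip_char:
  fixes x g :: "real^2^2"
  assumes "det x \<noteq> 0" "invertible g" "g ** x ** matrix_inv g = x ** x ** x ** x"
    "x ** x ** x \<noteq> mat 1" "x ** x ** x ** x ** x \<noteq> mat 1"
  shows "det x = 1 \<and> trace x = 2"
proof -
  obtain a b c d where x: "x = mk a b c d" by (rule mk_cases)
  note cd = conj_det_tr[OF assms(2,3)]
  have "det x = det x ^ 4" using cd(1) by (simp add: det_mul power4_eq_xxxx)
  then have "det x * (det x - 1) * ((det x)^2 + det x + 1) = 0" by algebra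
  moreover have "(det x)^2 + det x + 1 > 0"
  proof - have "(det x)^2 + det x + 1 = (det x + 1/2)^2 + 3/4" by algebra
    then show ?thesis by (metis add_pos_nonneg zero_le_power2 add.commute zero_less_divide_iff zero_less_numeral) qed
  ultimately have d1: "det x = 1" using assms(1) by simp
  then have d: "a*d - b*c = 1" using x by simp
  define t where "t = a + d"
  have "t = t^4 - 4*t^2 + 2" using cd(2) tr4[OF d t_def] x t_def by (simp add: Let_def)
  then have "(t - 2) * (t + 1) * (t^2 + t - 1) = 0" by algebra
  moreover have "t \<noteq> -1" using cube[OF d] assms(4) x t_def by auto
  moreover have "t^2 + t - 1 \<noteq> 0" using fifth[OF d] assms(5) x t_def by auto
  ultimately have "t = 2" by simp
  then show ?thesis using d1 x t_def by simp
qed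

definition "E12 = mk 0 1 0 0"
definition "E21 = mk 0 0 1 0"

lemma P_exists:
  fixes A B :: "real^2^2"
  assumes "trace A = 0" "trace B = 0" "A**A = 0" "B**B = 0" "trace (A**B) = 1"
  shows "\<exists>P. det P \<noteq> 0 \<and> P ** E12 = A ** P \<and> P ** E21 = B ** P"
proof -
  obtain a1 a2 a3 a4 where A: "A = mk a1 a2 a3 a4" by (rule mk_cases)
  obtain b1 b2 b3 b4 where B: "B = mk b1 b2 b3 b4" by (rule mk_cases)
  have z: "(0::real^2^2) = mk 0 0 0 0" by (simp add: mat2_eq_iff)
  have h: "a1 + a4 = 0" "b1 + b4 = 0" "a1 * a1 + a2 * a3 = 0" "a1 * a2+a2 * a4 = 0" "a3 * a1+a4 * a3 = 0" "a3 * a2+a4 * a4 = 0"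
    "b1 * b1 + b2 * b3 = 0" "b1 * b2+b2 * b4 = 0" "b3 * b1+b4 * b3 = 0" "b3 * b2+b4 * b4 = 0"
    "a1 * b1 + a2 * b3 + (a3 * b2 + a4 * b4) = 1"
    using assms unfolding A B z by (simp_all add: algebra_simps)
  show ?thesis
  proof (cases "b1 = 0 \<and> b2 = 0")
    case False
    define v1 where "v1 = b2"
    define v2 where "v2 = -b1"
    define P where "P = mk (a1 * v1 + a2 * v2) v1 (a3 * v1+a4 * v2) v2"
    have "det P = 0 \<Longrightarrow> b1 = 0" unfolding P_def v1_def v2_def using h by (simp; algebra)
    moreover have "det P = 0 \<Longrightarrow> b2 = 0" unfolding P_def v1_def v2_def using h by (simp; algebra)
    moreover have "P ** E12 = A ** P" unfolding P_def v1_def v2_def A E12_def using h by (simp; algebra)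
    moreover have "P ** E21 = B ** P" unfolding P_def v1_def v2_def B E21_def using h apply simp
      apply (intro conjI) by algebra+
    ultimately show ?thesis using False by blast
  next
    case True
    define v1 where "v1 = -b4"
    define v2 where "v2 = b3"
    define P where "P = mk (a1 * v1 + a2 * v2) v1 (a3 * v1+a4 * v2) v2"
    have "det P = 0 \<Longrightarrow> b3 = 0" unfolding P_def v1_def v2_def using h True by (simp; algebra)
    moreover have "b3 \<noteq> 0" using h True by auto
    moreover have "P ** E12 = A ** P" unfolding P_def v1_def v2_def A E12_def using h by (simp; algebra)
    moreover have "P ** E21 = B ** P" unfolding P_def v1_def v2_def B E21_def using h True by simp
    ultimately show ?thesis by blast
  qed
qed

lemma tr_formula:
  fixes A B :: "real^2^2"
  assumes "trace A = 0" "trace B = 0" "A**A = 0"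
  shows "trace ((mat 1 + A) ** (mat 1 - B) ** (mat 1 + A)) = 2 - 2 * trace (A ** B)"
proof -
  obtain a1 a2 a3 a4 where A: "A = mk a1 a2 a3 a4" by (rule mk_cases)
  obtain b1 b2 b3 b4 where B: "B = mk b1 b2 b3 b4" by (rule mk_cases)
  have z: "(0::real^2^2) = mk 0 0 0 0" by (simp add: mat2_eq_iff)
  have h: "a1 + a4 = 0" "b1 + b4 = 0" "a1 * a1 + a2 * a3 = 0" "a1 * a2+a2 * a4 = 0" "a3 * a1+a4 * a3 = 0" "a3 * a2+a4 * a4 = 0"
    using assms unfolding A B z by (simp_all add: algebra_simps)
  show ?thesis unfolding A B mk_one using h by (simp; algebra)
qed

lemma sq_neg_tr: assumes "(X::real^2^2) ** X = - mat 1" shows "trace X = 0"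
proof -
  obtain a b c d where X: "X = mk a b c d" by (rule mk_cases)
  have m: "- mat 1 = mk (-1) 0 0 (-1)" by (simp add: mat2_eq_iff mat_def)
  have h: "a * a + b * c = -1" "a * b+b * d = 0" "c * a+d * c = 0" "c * b+d * d = -1" using assms unfolding X m by simp_all
  show ?thesis
  proof (rule ccontr)
    assume "trace X \<noteq> 0" then have "a + d \<noteq> 0" using X by simp
    then have "b = 0" "c = 0" using h by (metis distrib_left mult.commute mult_eq_0_iff, metis distrib_left mult.commute mult_eq_0_iff add.commute)
    then show False using h(1) by (metis add.right_neutral mult_zero_left not_square_less_zero neg_less_0_iff_less zero_less_one)
  qed
qed

lemma cent_traceless:
  fixes A C :: "real^2^2"
  assumes "trace A = 0" "trace C = 0" "A \<noteq> 0" "C ** A = A ** C"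
  shows "\<exists>l. C = l *\<^sub>R A"
proof -
  obtain p q r s where A: "A = mk p q r s" by (rule mk_cases)
  obtain x y z w where C: "C = mk x y z w" by (rule mk_cases)
  have zz: "(0::real^2^2) = mk 0 0 0 0" by (simp add: mat2_eq_iff)
  have h: "p + s = 0" "x + w = 0" "x * p + y * r = p * x+q * z" "x * q+y * s = p * y+q * w" "z * p+w * r = r * x+s * z" "z * q+w * s = r * y+s * w"
    using assms unfolding A C by simp_all
  have nz: "p \<noteq> 0 \<or> q \<noteq> 0 \<or> r \<noteq> 0" using assms(3) h(1) unfolding A zz by auto
  show ?thesis
  proof (cases "q = 0")
    case False
    have "C = (y/q) *\<^sub>R A" unfolding A C using False h apply simp apply (intro conjI) by (simp add: field_simps; algebra)+
    then show ?thesis by blast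
  next
    case q: True
    show ?thesis
    proof (cases "r = 0")
      case False
      have "C = (z/r) *\<^sub>R A" unfolding A C using False q h apply simp apply (intro conjI) by (simp add: field_simps; algebra)+
      then show ?thesis by blast
    next
      case True
      then have "p \<noteq> 0" using nz q by auto
      have "s = -p" "w = -x" "y = 0" "z = 0" using h True q \<open>p \<noteq> 0\<close> by (auto simp: algebra_simps)
      then have "C = (x/p) *\<^sub>R A" unfolding A C using \<open>p \<noteq> 0\<close> q True by simp
      then show ?thesis by blast
    qed
  qed
qed

lemma central: assumes "K ** mk 1 1 0 1 = mk 1 1 0 1 ** K" "K ** mk 1 0 1 1 = mk 1 0 1 1 ** K"
  shows "K = (K$1$1) *\<^sub>R mat 1"
proof -
  obtain a b c d where K: "K = mk a b c d" by (rule mk_cases)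
  show ?thesis using assms unfolding K mk_one by simp
qed

lemma additive_cont:
  fixes L :: "real \<Rightarrow> real"
  assumes add: "\<And>s t. L (s + t) = L s + L t" and cont: "continuous_on UNIV L"
  shows "L t = t * L 1"
proof -
  have L0: "L 0 = 0" using add[of 0 0] by simp
  have Ln: "L (real n * x) = real n * L x" for n x
    by (induction n) (simp_all add: L0 distrib_right add)
  have Lneg: "L (- x) = - L x" for x using add[of x "-x"] L0 by simp
  have Li: "L (of_int k * x) = of_int k * L x" for k x
  proof (cases "k \<ge> 0")
    case True then show ?thesis using Ln[of "nat k" x] by simp
  next
    case False
    then have "of_int k * x = - (real (nat (-k)) * x)" by simp
    then show ?thesis using Ln[of "nat (-k)" x] Lneg False by simp
  qed
  have Q: "L q = q * L 1" if qR: "q \<in> \<rat>" for q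
  proof -
    obtain a b where ab: "b > 0" "q = of_int a / of_int b" using Rats_cases'[OF qR] by (metis of_int_0_less_iff)
    have e: "of_int b * q = of_int a" using ab by simp
    have "of_int b * L q = L (of_int b * q)" using Li by simp
    then have "of_int b * L q = of_int a * L 1" using e Li[of a 1] by (metis mult.right_neutral)
    then have "L q = (of_int a / of_int b) * L 1" using ab(1) by (simp add: field_simps)
    then show ?thesis using ab by simp
  qed
  have cl: "closed {x. L x = x * L 1}"
    by (rule closed_Collect_eq) (auto intro!: continuous_intros cont)
  have "\<rat> \<subseteq> {x. L x = x * L 1}" using Q by blast
  then have "closure \<rat> \<subseteq> {x. L x = x * L 1}" using cl by (rule closure_minimal)
  then show ?thesis using Rats_closure_real by auto
qed

definition nn :: "real \<Rightarrow> real^2^2" where "nn t = mk 1 t 0 1"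
definition mm :: "real \<Rightarrow> real^2^2" where "mm t = mk 1 0 t 1"

lemma sl2_gen: assumes "a * d - b * c = 1"
  shows "\<exists>x y z u v. mk a b c d = mm x ** nn y ** mm z ** nn u ** mm v"
proof (cases "c = 0")
  case False
  have "mk a b c d = mm 0 ** nn ((a - 1)/c) ** mm c ** nn ((d - 1)/c) ** mm 0"
    using False assms by (simp add: nn_def mm_def field_simps; algebra?)
  then show ?thesis by blast
next
  case True
  then have a: "a \<noteq> 0" using assms by auto
  have "mk a b c d = mm (-1) ** nn ((a - 1)/a) ** mm a ** nn ((b + d - 1)/a) ** mm 0"
    using True a assms by (simp add: nn_def mm_def field_simps; algebra?)
  then show ?thesis by blast
qed

lemma mk_trace_scale: "trace (k *\<^sub>R (X::real^2^2)) = k * trace X"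
  by (rule mk_cases[where X=X]) (simp add: algebra_simps)
lemma mk_det_scale: "det (k *\<^sub>R (X::real^2^2)) = k^2 * det X"
  by (rule mk_cases[where X=X]) (simp add: algebra_simps power2_eq_square)

lemma sc_left: "(k *\<^sub>R (A::real^2^2)) ** B = k *\<^sub>R (A ** B)"
  by (simp add: scalar_matrix_assoc)
lemma sc_right: "(A::real^2^2) ** (k *\<^sub>R B) = k *\<^sub>R (A ** B)"
  by (metis matrix_scalar_ac scalar_matrix_assoc)

lemma inv_form:
  fixes P g :: "real^2^2"
  assumes "det P \<noteq> 0" "det g \<noteq> 0" "c \<noteq> 0"
  shows "matrix_inv (c *\<^sub>R (P ** g ** matrix_inv P)) = (1/c) *\<^sub>R (P ** matrix_inv g ** matrix_inv P)"
proof (rule minv_unique)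
  have iP: "P ** matrix_inv P = mat 1" "matrix_inv P ** P = mat 1" using minv_props assms(1) inv_iff_det by auto
  have ig: "g ** matrix_inv g = mat 1" "matrix_inv g ** g = mat 1" using minv_props assms(2) inv_iff_det by auto
  have "P ** g ** matrix_inv P ** (P ** matrix_inv g ** matrix_inv P) = P ** g ** (matrix_inv P ** P) ** matrix_inv g ** matrix_inv P"
    by (simp add: matrix_mul_assoc)
  also have "\<dots> = mat 1" using iP ig by (simp add: matrix_mul_assoc[symmetric])
  finally have 1: "P ** g ** matrix_inv P ** (P ** matrix_inv g ** matrix_inv P) = mat 1" .
  have "P ** matrix_inv g ** matrix_inv P ** (P ** g ** matrix_inv P) = P ** matrix_inv g ** (matrix_inv P ** P) ** g ** matrix_inv P"
    by (simp add: matrix_mul_assoc)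
  also have "\<dots> = mat 1" using iP ig by (simp add: matrix_mul_assoc[symmetric])
  finally have 2: "P ** matrix_inv g ** matrix_inv P ** (P ** g ** matrix_inv P) = mat 1" .
  show "c *\<^sub>R (P ** g ** matrix_inv P) ** ((1/c) *\<^sub>R (P ** matrix_inv g ** matrix_inv P)) = mat 1"
    using 1 assms(3) by (simp add: sc_left sc_right)
  show "(1/c) *\<^sub>R (P ** matrix_inv g ** matrix_inv P) ** (c *\<^sub>R (P ** g ** matrix_inv P)) = mat 1"
    using 2 assms(3) by (simp add: sc_left sc_right)
qed

lemma R_inf_from_form:
  assumes SL: "SL2 \<subseteq> G" "G \<subseteq> GL2" and P: "det P \<noteq> 0"
    and form: "\<forall>g\<in>G. \<exists>c. c \<noteq> 0 \<and> \<phi> g = c *\<^sub>R (P ** g ** matrix_inv P)"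
    and phi1: "\<phi> (mat 1) = mat 1"
  shows "R_infinite G \<phi>"
proof -
  define r where "r = twisted_rel G \<phi>"
  define f where "f x = trace (x ** P)^2 / det (x ** P)" for x
  have iP: "P ** matrix_inv P = mat 1" "matrix_inv P ** P = mat 1" using minv_props P inv_iff_det by auto
  have one: "mat 1 \<in> G" using SL(1) unfolding SL2_def by (simp add: subset_iff)
  have detG: "det g \<noteq> 0" if "g \<in> G" for g using SL(2) that by (auto simp: GL2_def inv_iff_det)
  have finv: "f y = f x" if xy: "(x, y) \<in> r" for x y
  proof -
    obtain g where g: "g \<in> G" "y = g ** x ** matrix_inv (\<phi> g)" using xy unfolding r_def twisted_rel_def by force
    obtain c where c: "c \<noteq> 0" "\<phi> g = c *\<^sub>R (P ** g ** matrix_inv P)" using form g(1) by blast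
    have ig: "g ** matrix_inv g = mat 1" "matrix_inv g ** g = mat 1" using minv_props detG[OF g(1)] inv_iff_det by auto
    have "y ** P = (1/c) *\<^sub>R (g ** x ** (P ** matrix_inv g ** (matrix_inv P ** P)))"
      using g(2) c inv_form[OF P detG[OF g(1)] c(1)] by (simp add: sc_left sc_right matrix_mul_assoc)
    also have "\<dots> = (1/c) *\<^sub>R (g ** (x ** P) ** matrix_inv g)" using iP by (simp add: matrix_mul_assoc)
    finally have yP: "y ** P = (1/c) *\<^sub>R (g ** (x ** P) ** matrix_inv g)" .
    have gi: "invertible g" using detG[OF g(1)] inv_iff_det by auto
    note cd = conj_det_tr[OF gi refl, of "x ** P"]
    show ?thesis unfolding f_def yP mk_trace_scale mk_det_scale cd using c(1)
      by (cases "det (x ** P) = 0") (simp_all add: power_divide field_simps)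
  qed
  have refl: "(x, x) \<in> r" if "x \<in> G" for x
    using that one phi1 unfolding r_def twisted_rel_def
    by (auto intro!: bexI[of _ "mat 1"] simp: minv_unique[of "mat 1" "mat 1"])
  have "infinite (f ` G)"
  proof -
    define dP where "dP = det P"
    define xs where "xs n = mk (real n) (- dP) 1 0 ** matrix_inv P" for n
    have xsP: "xs n ** P = mk (real n) (- dP) 1 0" for n unfolding xs_def using iP by (simp add: matrix_mul_assoc[symmetric])
    have "det (xs n) * dP = dP" for n using xsP[of n] unfolding dP_def by (metis det_mul mk_det mult_zero_left mult_zero_right diff_zero mult_minus_right minus_mult_minus mult.commute mult_1 diff_minus_eq_add add_0 mult_1_right)
    then have "det (xs n) = 1" for n using P unfolding dP_def by simp
    then have xsG: "xs n \<in> G" for n using SL(1) by (auto simp: SL2_def)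
    have fx: "f (xs n) = (real n)^2 / dP" for n unfolding f_def xsP dP_def by simp
    have "inj (\<lambda>n::nat. (real n)^2 / dP)"
    proof (rule injI)
      fix a b :: nat assume "(real a)^2 / dP = (real b)^2 / dP"
      then have "(real a)^2 = (real b)^2" using P dP_def by simp
      then show "a = b" by (metis of_nat_0_le_iff of_nat_eq_iff power2_eq_iff_nonneg)
    qed
    then have "infinite (range (\<lambda>n::nat. (real n)^2 / dP))" by (rule range_inj_infinite)
    moreover have "range (\<lambda>n::nat. (real n)^2 / dP) \<subseteq> f ` G" using xsG fx by (auto intro!: image_eqI)
    ultimately show ?thesis using finite_subset by blast
  qed
  moreover have "finite (f ` G)" if fin: "finite (G // r)"
  proof -
    have "f ` G \<subseteq> (\<Union>C\<in>G // r. f ` C)"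
    proof
      fix z assume "z \<in> f ` G" then obtain x where x: "x \<in> G" "z = f x" by auto
      then have "r `` {x} \<in> G // r" by (auto simp: quotient_def)
      moreover have "x \<in> r `` {x}" using refl[OF x(1)] by auto
      ultimately show "z \<in> (\<Union>C\<in>G // r. f ` C)" using x by blast
    qed
    moreover have "finite (f ` C)" if "C \<in> G // r" for C
    proof -
      obtain x where "C = r `` {x}" using \<open>C \<in> G // r\<close> by (auto simp: quotient_def)
      then have "f ` C \<subseteq> {f x}" using finv by auto
      then show ?thesis using finite_subset by blast
    qed
    ultimately show ?thesis using fin by (meson finite_UN_I finite_subset)
  qed
  ultimately show ?thesis unfolding R_infinite_def r_def by blast
qed

lemma mk_neg[simp]: "- mk a b c d = mk (-a) (-b) (-c) (-d)" by (simp add: mat2_eq_iff)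
lemma m_radd: fixes A B C :: "real^2^2" shows "(A + B) ** C = A ** C + B ** C"
proof -
  obtain a b c d where A: "A = mk a b c d" by (rule mk_cases)
  obtain e f g h where B: "B = mk e f g h" by (rule mk_cases)
  obtain i j k l where C: "C = mk i j k l" by (rule mk_cases)
  show ?thesis unfolding A B C by (simp add: algebra_simps)
qed
lemma m_ladd: fixes A B C :: "real^2^2" shows "C ** (A + B) = C ** A + C ** B"
proof -
  obtain a b c d where A: "A = mk a b c d" by (rule mk_cases)
  obtain e f g h where B: "B = mk e f g h" by (rule mk_cases)
  obtain i j k l where C: "C = mk i j k l" by (rule mk_cases)
  show ?thesis unfolding A B C by (simp add: algebra_simps)
qed
lemma m_rdiff: fixes A B C :: "real^2^2" shows "(A - B) ** C = A ** C - B ** C"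
proof -
  obtain a b c d where A: "A = mk a b c d" by (rule mk_cases)
  obtain e f g h where B: "B = mk e f g h" by (rule mk_cases)
  obtain i j k l where C: "C = mk i j k l" by (rule mk_cases)
  show ?thesis unfolding A B C by (simp add: algebra_simps)
qed
lemma m_ldiff: fixes A B C :: "real^2^2" shows "C ** (A - B) = C ** A - C ** B"
proof -
  obtain a b c d where A: "A = mk a b c d" by (rule mk_cases)
  obtain e f g h where B: "B = mk e f g h" by (rule mk_cases)
  obtain i j k l where C: "C = mk i j k l" by (rule mk_cases)
  show ?thesis unfolding A B C by (simp add: algebra_simps)
qed
lemma m_negl: fixes A B C :: "real^2^2" shows "(- A) ** B = - (A ** B)"
proof -
  obtain a b c d where A: "A = mk a b c d" by (rule mk_cases)
  obtain e f g h where B: "B = mk e f g h" by (rule mk_cases)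
  obtain i j k l where C: "C = mk i j k l" by (rule mk_cases)
  show ?thesis unfolding A B C by (simp add: algebra_simps)
qed
lemma m_negr: fixes A B C :: "real^2^2" shows "A ** (- B) = - (A ** B)"
proof -
  obtain a b c d where A: "A = mk a b c d" by (rule mk_cases)
  obtain e f g h where B: "B = mk e f g h" by (rule mk_cases)
  obtain i j k l where C: "C = mk i j k l" by (rule mk_cases)
  show ?thesis unfolding A B C by (simp add: algebra_simps)
qed
lemma trace_neg: "trace (- (A::real^2^2)) = - trace A"
proof -
  obtain a b c d where X: "A = mk a b c d" by (rule mk_cases)
  show ?thesis unfolding X by simp
qed
lemma comm_sub1: fixes X Y :: "real^2^2" assumes "X ** Y = Y ** X"
  shows "(X - mat 1) ** (Y - mat 1) = (Y - mat 1) ** (X - mat 1)"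
proof -
  obtain a b c d where X: "X = mk a b c d" by (rule mk_cases)
  obtain e f g h where Y: "Y = mk e f g h" by (rule mk_cases)
  have h: "a * e + b * g = e * a + f * c" "a * f + b * h = e * b + f * d" "c * e + d * g = g * a + h * c" "c * f + d * h = g * b + h * d"
    using assms unfolding X Y by simp_all
  show ?thesis unfolding X Y mk_one using h by (simp add: algebra_simps)
qed
lemma trace_one2: "trace (mat 1 :: real^2^2) = 2"
  by (simp add: mk_one)

lemma unip_sq: assumes "det (x::real^2^2) = 1" "trace x = 2"
  shows "(x - mat 1) ** (x - mat 1) = 0" "trace (x - mat 1) = 0"
proof -
  obtain a b c d where x: "x = mk a b c d" by (rule mk_cases)
  have z: "(0::real^2^2) = mk 0 0 0 0" by (simp add: mat2_eq_iff)
  have h: "a * d - b * c = 1" "a + d = 2" using assms unfolding x by simp_all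
  have "(mk a b c d - mk 1 0 0 1) ** (mk a b c d - mk 1 0 0 1) = mk 0 0 0 0"
    using h by simp (intro conjI; algebra)
  then show "(x - mat 1) ** (x - mat 1) = 0" unfolding x z mk_one .
  show "trace (x - mat 1) = 0" using assms unfolding x mk_one by simp
qed
lemma nil_add: assumes "(A::real^2^2) ** A = 0"
  shows "(mat 1 + a *\<^sub>R A) ** (mat 1 + b *\<^sub>R A) = mat 1 + (a + b) *\<^sub>R A"
  using assms by (simp add: m_ladd m_radd sc_left sc_right scaleR_add_left)

lemma nil_inv: assumes "(A::real^2^2) ** A = 0"
  shows "matrix_inv (mat 1 + a *\<^sub>R A) = mat 1 + (- a) *\<^sub>R A"
  by (rule minv_unique; metis nil_add[OF assms] add.right_inverse add.left_inverse scaleR_zero_left add_0_right)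

lemma nn_prod: "nn s ** nn t = nn (s + t)" by (simp add: nn_def)
lemma mm_prod: "mm s ** mm t = mm (s + t)" by (simp add: mm_def)
lemma nn_E: "nn t = mat 1 + t *\<^sub>R E12" by (simp add: nn_def E12_def mk_one)
lemma mm_E: "mm t = mat 1 + t *\<^sub>R E21" by (simp add: mm_def E21_def mk_one)
lemma nn_det: "det (nn t) = 1" by (simp add: nn_def)
lemma mm_det: "det (mm t) = 1" by (simp add: mm_def)
lemma nn0: "nn 0 = mat 1" by (simp add: nn_def mk_one)

locale autG =
  fixes G :: "(real^2^2) set" and \<phi> :: "real^2^2 \<Rightarrow> real^2^2"
  assumes SLG: "SL2 \<subseteq> G" and GLG: "G \<subseteq> GL2"
    and mulG: "\<And>x y. x \<in> G \<Longrightarrow> y \<in> G \<Longrightarrow> x ** y \<in> G"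
    and invG: "\<And>x. x \<in> G \<Longrightarrow> matrix_inv x \<in> G"
    and aut: "top_automorphism G \<phi>"
begin

lemma hom: "x \<in> G \<Longrightarrow> y \<in> G \<Longrightarrow> \<phi> (x ** y) = \<phi> x ** \<phi> y"
  using aut unfolding top_automorphism_def by blast

lemma homeo: obtains \<psi> where "homeomorphism G G \<phi> \<psi>"
  using aut unfolding top_automorphism_def by blast

lemma img: "\<phi> ` G = G" using homeo unfolding homeomorphism_def by metis
lemma cont: "continuous_on G \<phi>" using homeo unfolding homeomorphism_def by metis
lemma injG: "inj_on \<phi> G"
proof -
  obtain \<psi> where "homeomorphism G G \<phi> \<psi>" by (rule homeo)
  then show ?thesis unfolding homeomorphism_def by (metis inj_on_inverseI)
qed
lemma phiG: "x \<in> G \<Longrightarrow> \<phi> x \<in> G" using img by blast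
lemma detG: "x \<in> G \<Longrightarrow> det x \<noteq> 0" using GLG by (auto simp: GL2_def inv_iff_det)
lemma slG: "det x = 1 \<Longrightarrow> x \<in> G" using SLG by (auto simp: SL2_def)
lemma invbl: "x \<in> G \<Longrightarrow> invertible x" using detG inv_iff_det by blast
lemma iL: "x \<in> G \<Longrightarrow> matrix_inv x ** x = mat 1" using minv_props invbl by blast
lemma iR: "x \<in> G \<Longrightarrow> x ** matrix_inv x = mat 1" using minv_props invbl by blast

lemma oneG: "mat 1 \<in> G" by (rule slG) simp

lemma phi1: "\<phi> (mat 1) = mat 1"
proof -
  have e: "\<phi> (mat 1) = \<phi> (mat 1) ** \<phi> (mat 1)" using hom[OF oneG oneG] by simp
  have "mat 1 = matrix_inv (\<phi> (mat 1)) ** \<phi> (mat 1)" using iL[OF phiG[OF oneG]] by simp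
  also have "\<dots> = matrix_inv (\<phi> (mat 1)) ** (\<phi> (mat 1) ** \<phi> (mat 1))" using e by simp
  also have "\<dots> = \<phi> (mat 1)" using iL[OF phiG[OF oneG]] by (simp add: matrix_mul_assoc)
  finally show ?thesis by simp
qed

lemma phi_inv: assumes "x \<in> G" shows "\<phi> (matrix_inv x) = matrix_inv (\<phi> x)"
proof -
  have "\<phi> x ** \<phi> (matrix_inv x) = mat 1" using hom[OF assms invG[OF assms]] iR[OF assms] phi1 by simp
  moreover have "\<phi> (matrix_inv x) ** \<phi> x = mat 1" using hom[OF invG[OF assms] assms] iL[OF assms] phi1 by simp
  ultimately show ?thesis by (metis minv_unique)
qed

lemma phi_conj: assumes "g \<in> G" "x \<in> G"
  shows "\<phi> (g ** x ** matrix_inv g) = \<phi> g ** \<phi> x ** matrix_inv (\<phi> g)"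
  using assms by (simp add: hom mulG invG phi_inv)

lemma phi_inj: "x \<in> G \<Longrightarrow> y \<in> G \<Longrightarrow> \<phi> x = \<phi> y \<Longrightarrow> x = y"
  using injG by (meson inj_onD)

lemma nnG: "nn t \<in> G" by (rule slG) (simp add: nn_det)
lemma mmG: "mm t \<in> G" by (rule slG) (simp add: mm_det)

definition "A0 = \<phi> (nn 1) - mat 1"

lemma A0_props: "trace A0 = 0" "A0 ** A0 = 0" "A0 \<noteq> 0"
proof -
  define x where "x = \<phi> (nn 1)"
  define D where "D = mk 2 0 0 (1/2)"
  have DG: "D \<in> G" unfolding D_def by (rule slG) simp
  have e1: "D ** nn 1 ** matrix_inv D = nn 4" unfolding D_def nn_def by (simp add: mk_inv)
  have e2: "nn 4 = nn 1 ** nn 1 ** nn 1 ** nn 1" by (simp add: nn_prod)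
  have "\<phi> D ** x ** matrix_inv (\<phi> D) = \<phi> (nn 4)" using phi_conj[OF DG nnG, of 1] e1 by (simp add: x_def)
  also have "\<phi> (nn 4) = x ** x ** x ** x" unfolding e2 x_def by (simp add: hom mulG nnG)
  finally have "\<phi> D ** x ** matrix_inv (\<phi> D) = x ** x ** x ** x" .
  moreover have "x ** x ** x \<noteq> mat 1"
  proof
    assume "x ** x ** x = mat 1"
    then have "\<phi> (nn 3) = \<phi> (mat 1)" unfolding x_def phi1 by (simp add: hom[symmetric] mulG nnG nn_prod)
    then have "nn 3 = mat 1" using phi_inj nnG oneG by blast
    then show False by (simp add: nn_def mk_one)
  qed
  moreover have "x ** x ** x ** x ** x \<noteq> mat 1"
  proof
    assume "x ** x ** x ** x ** x = mat 1"
    then have "\<phi> (nn 5) = \<phi> (mat 1)" unfolding x_def phi1 by (simp add: hom[symmetric] mulG nnG nn_prod)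
    then have "nn 5 = mat 1" using phi_inj nnG oneG by blast
    then show False by (simp add: nn_def mk_one)
  qed
  moreover have "det x \<noteq> 0" unfolding x_def using detG phiG nnG by blast
  moreover have "invertible (\<phi> D)" using invbl phiG DG by blast
  ultimately have u: "det x = 1 \<and> trace x = 2" using unip_char by blast
  show "trace A0 = 0" "A0 ** A0 = 0" using unip_sq u unfolding A0_def x_def by auto
  have "x \<noteq> mat 1"
  proof
    assume "x = mat 1"
    then have "nn 1 = mat 1" using phi_inj nnG oneG phi1 unfolding x_def by metis
    then show False by (simp add: nn_def mk_one)
  qed
  then show "A0 \<noteq> 0" unfolding A0_def x_def by simp
qed


lemma nn_inv: "matrix_inv (nn t) = nn (-t)"
  by (rule minv_unique) (simp_all add: nn_prod nn0)

lemma ex_l: "\<exists>l. \<phi> (nn t) = mat 1 + l *\<^sub>R A0"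
proof -
  note AP = A0_props
  have pos: "\<exists>l. \<phi> (nn t) = mat 1 + l *\<^sub>R A0" if tp: "t > 0" for t
  proof -
    define E where "E = mk (sqrt t) 0 0 (1 / sqrt t)"
    have EG: "E \<in> G" unfolding E_def using tp by (intro slG) simp
    have "E ** nn 1 ** matrix_inv E = nn t" unfolding E_def nn_def using tp by (simp add: mk_inv)
    then have c: "\<phi> E ** \<phi> (nn 1) ** matrix_inv (\<phi> E) = \<phi> (nn t)" using phi_conj[OF EG nnG, of 1] by simp
    have x1: "det (\<phi> (nn 1)) = 1" "trace (\<phi> (nn 1)) = 2"
    proof -
      have "\<phi> (nn 1) = mat 1 + A0" unfolding A0_def by simp
      then have "trace (\<phi> (nn 1)) = 2" using AP(1) by (simp add: trace_add trace_one2)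
      moreover have "det (\<phi> (nn 1)) = 1"
      proof -
        obtain a b c d where A: "A0 = mk a b c d" by (rule mk_cases)
        have z: "(0::real^2^2) = mk 0 0 0 0" by (simp add: mat2_eq_iff)
        have h: "a + d = 0" "a * a + b * c = 0" using AP(1,2) unfolding A z by simp_all
        have "det (mat 1 + A0) = 1" unfolding A mk_one using h by simp algebra
        then show ?thesis using \<open>\<phi> (nn 1) = mat 1 + A0\<close> by simp
      qed
      ultimately show "det (\<phi> (nn 1)) = 1" "trace (\<phi> (nn 1)) = 2" by auto
    qed
    have inv: "invertible (\<phi> E)" using invbl phiG EG by blast
    have dt: "det (\<phi> (nn t)) = 1" "trace (\<phi> (nn t)) = 2" using conj_det_tr[OF inv c] x1 by auto
    have "nn t ** nn 1 = nn 1 ** nn t" by (simp add: nn_prod add.commute)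
    then have cm: "\<phi> (nn t) ** \<phi> (nn 1) = \<phi> (nn 1) ** \<phi> (nn t)" by (metis hom nnG)
    define C where "C = \<phi> (nn t) - mat 1"
    have "C ** A0 = A0 ** C" unfolding C_def A0_def by (rule comm_sub1[OF cm])
    moreover have "trace C = 0" unfolding C_def using dt by (simp add: trace_sub trace_one2)
    ultimately obtain l where "C = l *\<^sub>R A0" using cent_traceless AP(1,3) by blast
    then show ?thesis unfolding C_def by (metis add.commute diff_add_cancel)
  qed
  show ?thesis
  proof (cases "t > 0")
    case True then show ?thesis using pos by blast
  next
    case False
    show ?thesis
    proof (cases "t = 0")
      case True then show ?thesis using phi1 nn0 by (metis add_0_right scaleR_zero_left)
    next
      case f2: False
      then obtain l where l: "\<phi> (nn (-t)) = mat 1 + l *\<^sub>R A0" using pos False by force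
      have "\<phi> (nn t) = \<phi> (matrix_inv (nn (-t)))" by (simp add: nn_inv)
      also have "\<dots> = matrix_inv (mat 1 + l *\<^sub>R A0)" using phi_inv[OF nnG] l by simp
      also have "\<dots> = mat 1 + (-l) *\<^sub>R A0" using nil_inv A0_props(2) by blast
      finally show ?thesis by blast
    qed
  qed
qed

definition "L t = (SOME l. \<phi> (nn t) = mat 1 + l *\<^sub>R A0)"

lemma L_prop: "\<phi> (nn t) = mat 1 + L t *\<^sub>R A0"
  unfolding L_def using ex_l by (rule someI_ex)

lemma L_uniq: "mat 1 + a *\<^sub>R A0 = mat 1 + b *\<^sub>R A0 \<Longrightarrow> a = b"
  using A0_props(3) by (simp add: scaleR_cancel_right)

lemma L_add: "L (s + t) = L s + L t"
proof -
  have "mat 1 + L (s + t) *\<^sub>R A0 = \<phi> (nn s ** nn t)" by (simp add: L_prop nn_prod)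
  also have "\<dots> = mat 1 + (L s + L t) *\<^sub>R A0" by (simp add: hom nnG L_prop nil_add A0_props(2))
  finally show ?thesis by (rule L_uniq)
qed

lemma L1: "L 1 = 1"
proof -
  have "\<phi> (nn 1) = mat 1 + 1 *\<^sub>R A0" by (simp add: A0_def)
  then show ?thesis using L_prop[of 1] L_uniq by metis
qed

lemma L_cont: "continuous_on UNIV L"
proof -
  obtain i j where ij: "A0 $ i $ j \<noteq> 0" using A0_props(3) by (metis vec_eq_iff zero_index)
  have cn: "continuous_on UNIV nn" unfolding nn_E[abs_def] by (intro continuous_intros)
  have "continuous_on UNIV (\<lambda>t. \<phi> (nn t))"
    by (rule continuous_on_compose2[OF cont cn]) (auto simp: nnG)
  then have c2: "continuous_on UNIV (\<lambda>t. (\<phi> (nn t) $ i $ j - mat 1 $ i $ j) / A0 $ i $ j)"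
    using ij by (intro continuous_intros) auto
  have "L t = (\<phi> (nn t) $ i $ j - mat 1 $ i $ j) / A0 $ i $ j" for t
    using ij by (simp add: L_prop)
  then have "L = (\<lambda>t. (\<phi> (nn t) $ i $ j - mat 1 $ i $ j) / A0 $ i $ j)" by auto
  then show ?thesis using c2 by simp
qed

lemma phi_nn: "\<phi> (nn t) = mat 1 + t *\<^sub>R A0"
  using additive_cont[OF L_add L_cont, of t] L1 L_prop by simp


lemma m_zero: "X ** (0::real^2^2) = 0" "(0::real^2^2) ** X = 0"
  by (simp_all add: mat2_eq_iff matrix_matrix_mult_def)

lemma cancelR: "x \<in> G \<Longrightarrow> a ** x ** matrix_inv x = a" "x \<in> G \<Longrightarrow> a ** matrix_inv x ** x = a"
  by (simp_all add: matrix_mul_assoc[symmetric] iR iL)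

definition "Jm = mk 0 1 (-1) 0"
lemma JG: "Jm \<in> G" unfolding Jm_def by (rule slG) simp

definition "B0 = - (\<phi> Jm ** A0 ** matrix_inv (\<phi> Jm))"

lemma conj_lin: assumes "Y \<in> G"
  shows "Y ** (mat 1 + s *\<^sub>R M) ** matrix_inv Y = mat 1 + s *\<^sub>R (Y ** M ** matrix_inv Y)"
  using assms by (simp add: m_ladd m_radd sc_left sc_right iR)

lemma phi_mm: "\<phi> (mm t) = mat 1 + t *\<^sub>R B0"
proof -
  have "Jm ** nn (-t) ** matrix_inv Jm = mm t" unfolding Jm_def nn_def mm_def by (simp add: mk_inv)
  then have "\<phi> (mm t) = \<phi> Jm ** \<phi> (nn (-t)) ** matrix_inv (\<phi> Jm)" using phi_conj[OF JG nnG] by metis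
  also have "\<dots> = mat 1 + (-t) *\<^sub>R (\<phi> Jm ** A0 ** matrix_inv (\<phi> Jm))" by (simp only: phi_nn conj_lin[OF phiG[OF JG]])
  finally show ?thesis unfolding B0_def by simp
qed

lemma B0_props: "trace B0 = 0" "B0 ** B0 = 0"
proof -
  define Y where "Y = \<phi> Jm"
  have YG: "Y \<in> G" unfolding Y_def using phiG JG by blast
  have "trace (Y ** A0 ** matrix_inv Y) = trace A0" using conj_det_tr[OF invbl[OF YG] refl] by simp
  then show "trace B0 = 0" unfolding B0_def Y_def[symmetric] using A0_props(1) by (simp add: trace_neg)
  have "Y ** A0 ** matrix_inv Y ** (Y ** A0 ** matrix_inv Y) = Y ** (A0 ** A0) ** matrix_inv Y"
    using YG by (simp add: matrix_mul_assoc cancelR)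
  also have "\<dots> = 0" using A0_props(2) by (simp add: m_zero)
  finally show "B0 ** B0 = 0" unfolding B0_def Y_def[symmetric] by (simp add: m_negl m_negr)
qed

lemma phi_mneg: "\<phi> (- mat 1) = - mat 1"
proof -
  define N where "N = (- mat 1 :: real^2^2)"
  have NG: "N \<in> G" unfolding N_def by (rule slG) (simp add: mk_one)
  have Nc: "N ** x = x ** N" for x unfolding N_def by (simp add: m_negl m_negr)
  have com: "\<phi> N ** y = y ** \<phi> N" if yG: "y \<in> G" for y
  proof -
    obtain x where x: "x \<in> G" "y = \<phi> x" using yG img by blast
    have "\<phi> N ** \<phi> x = \<phi> (N ** x)" using hom[OF NG x(1)] by simp
    also have "\<dots> = \<phi> (x ** N)" using Nc by simp
    also have "\<dots> = \<phi> x ** \<phi> N" using hom[OF x(1) NG] by simp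
    finally show ?thesis using x(2) by simp
  qed
  have c1: "\<phi> N ** mk 1 1 0 1 = mk 1 1 0 1 ** \<phi> N" using com[OF nnG[of 1]] unfolding nn_def .
  have c2: "\<phi> N ** mk 1 0 1 1 = mk 1 0 1 1 ** \<phi> N" using com[OF mmG[of 1]] unfolding mm_def .
  obtain k where k: "\<phi> N = k *\<^sub>R mat 1" using central[OF c1 c2] by blast
  have "N ** N = mat 1" unfolding N_def by (simp add: m_negl m_negr)
  then have "\<phi> N ** \<phi> N = mat 1" using hom[OF NG NG] phi1 by simp
  then have "(k * k) *\<^sub>R mat 1 = (mat 1 :: real^2^2)" unfolding k by (simp add: sc_left sc_right)
  then have "k * k = 1" unfolding mk_one by simp
  then have "(k - 1) * (k + 1) = 0" by algebra
  then have "k = 1 \<or> k = -1" by auto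
  moreover have "k \<noteq> 1"
  proof
    assume "k = 1"
    then have "\<phi> N = \<phi> (mat 1)" using k phi1 by simp
    then have "N = mat 1" using phi_inj NG oneG by blast
    then show False unfolding N_def by (simp add: mk_one)
  qed
  ultimately have "\<phi> N = (-1) *\<^sub>R mat 1" using k by simp
  then show ?thesis unfolding N_def by simp
qed

lemma trAB: "trace (A0 ** B0) = 1"
proof -
  have J: "Jm = nn 1 ** mm (-1) ** nn 1" unfolding Jm_def nn_def mm_def by simp
  have "\<phi> Jm = (mat 1 + A0) ** (mat 1 - B0) ** (mat 1 + A0)"
    unfolding J by (simp add: hom mulG nnG mmG phi_nn phi_mm)
  moreover have "\<phi> Jm ** \<phi> Jm = - mat 1"
  proof -
    have "Jm ** Jm = - mat 1" unfolding Jm_def by (simp add: mk_one)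
    then show ?thesis using hom[OF JG JG] phi_mneg by simp
  qed
  ultimately have "trace ((mat 1 + A0) ** (mat 1 - B0) ** (mat 1 + A0)) = 0" using sq_neg_tr by simp
  then show ?thesis using tr_formula[OF A0_props(1) B0_props(1) A0_props(2)] by simp
qed

end

context autG begin

lemma main_form: "\<exists>P. det P \<noteq> 0 \<and> (\<forall>g\<in>G. \<exists>c. c \<noteq> 0 \<and> \<phi> g = c *\<^sub>R (P ** g ** matrix_inv P))"
proof -
  obtain P where P: "det P \<noteq> 0" "P ** E12 = A0 ** P" "P ** E21 = B0 ** P"
    using P_exists[OF A0_props(1) B0_props(1) A0_props(2) B0_props(2) trAB] by blast
  have iP: "P ** matrix_inv P = mat 1" "matrix_inv P ** P = mat 1" using minv_props P(1) inv_iff_det by auto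
  define Q where "Q s \<longleftrightarrow> \<phi> s ** P = P ** s" for s
  have Qn: "Q (nn t)" for t unfolding Q_def nn_E phi_nn[unfolded nn_E]
    by (simp add: m_ladd m_radd sc_left sc_right P(2))
  have Qm: "Q (mm t)" for t unfolding Q_def mm_E phi_mm[unfolded mm_E]
    by (simp add: m_ladd m_radd sc_left sc_right P(3))
  have Qmul: "Q (x ** y)" if "x \<in> G" "y \<in> G" "Q x" "Q y" for x y
    using that unfolding Q_def by (simp add: hom matrix_mul_assoc[symmetric]) (simp add: matrix_mul_assoc)
  have QSL: "Q s" if sd1: "det s = 1" for s
  proof -
    obtain a b c d where s: "s = mk a b c d" by (rule mk_cases)
    have "a * d - b * c = 1" using sd1 unfolding s by simp
    then obtain x y z u v where e: "s = mm x ** nn y ** mm z ** nn u ** mm v"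
      using sl2_gen[of a d b c] unfolding s by blast
    show ?thesis unfolding e by (intro Qmul mulG nnG mmG Qn Qm)
  qed
  have Q': "matrix_inv P ** \<phi> s = s ** matrix_inv P" if "det s = 1" for s
  proof -
    have "matrix_inv P ** \<phi> s = matrix_inv P ** (\<phi> s ** P) ** matrix_inv P"
      using iP by (simp add: matrix_mul_assoc[symmetric])
    also have "\<dots> = s ** matrix_inv P" using QSL[OF that] iP unfolding Q_def by (simp add: matrix_mul_assoc)
    finally show ?thesis .
  qed
  have "\<exists>c. c \<noteq> 0 \<and> \<phi> g = c *\<^sub>R (P ** g ** matrix_inv P)" if gG: "g \<in> G" for g
  proof -
    define K where "K = matrix_inv g ** matrix_inv P ** \<phi> g ** P"
    have comm: "K ** s = s ** K" if sd: "det s = 1" for s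
    proof -
      have sG: "s \<in> G" using slG sd by blast
      define gs where "gs = g ** s ** matrix_inv g"
      have gsd: "det gs = 1" unfolding gs_def using sd iR[OF gG] by (metis det_I det_mul mult.commute mult_1)
      have gsG: "gs \<in> G" using slG gsd by blast
      have gsg: "g ** s = gs ** g" unfolding gs_def using gG by (simp add: cancelR)
      have "K ** s = matrix_inv g ** matrix_inv P ** \<phi> g ** (P ** s)" unfolding K_def by (simp add: matrix_mul_assoc)
      also have "P ** s = \<phi> s ** P" using QSL[OF sd] unfolding Q_def by simp
      also have "matrix_inv g ** matrix_inv P ** \<phi> g ** (\<phi> s ** P) = matrix_inv g ** matrix_inv P ** \<phi> (g ** s) ** P"
        using hom[OF gG sG] by (simp add: matrix_mul_assoc)
      also have "\<dots> = matrix_inv g ** (matrix_inv P ** \<phi> gs) ** \<phi> g ** P"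
        unfolding gsg using hom[OF gsG gG] by (simp add: matrix_mul_assoc)
      also have "\<dots> = matrix_inv g ** (gs ** matrix_inv P) ** \<phi> g ** P" using Q'[OF gsd] by simp
      also have "\<dots> = s ** K" unfolding gs_def K_def using gG by (simp add: matrix_mul_assoc cancelR iL)
      finally show ?thesis .
    qed
    have "K = (K $ 1 $ 1) *\<^sub>R mat 1"
      by (rule central) (use comm[of "nn 1"] comm[of "mm 1"] in \<open>simp_all add: nn_def mm_def\<close>)
    then obtain k where k: "K = k *\<^sub>R mat 1" by blast
    have "matrix_inv P ** \<phi> g ** P = g ** K" unfolding K_def using gG by (simp add: matrix_mul_assoc iR)
    also have "\<dots> = k *\<^sub>R g" unfolding k by (simp add: sc_right)
    finally have e: "matrix_inv P ** \<phi> g ** P = k *\<^sub>R g" .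
    have "\<phi> g = P ** (matrix_inv P ** \<phi> g ** P) ** matrix_inv P" using iP by (simp add: matrix_mul_assoc) (simp add: matrix_mul_assoc[symmetric])
    also have "\<dots> = k *\<^sub>R (P ** g ** matrix_inv P)" unfolding e by (simp add: sc_left sc_right)
    finally have pg: "\<phi> g = k *\<^sub>R (P ** g ** matrix_inv P)" .
    have "k \<noteq> 0"
    proof
      assume "k = 0"
      then have "\<phi> g = 0" using pg by simp
      then show False using detG[OF phiG[OF gG]] by (simp add: mat2_eq_iff det_2)
    qed
    then show ?thesis using pg by blast
  qed
  then show ?thesis using P(1) by blast
qed

lemma R_inf: "R_infinite G \<phi>"
proof -
  obtain P where "det P \<noteq> 0" "\<forall>g\<in>G. \<exists>c. c \<noteq> 0 \<and> \<phi> g = c *\<^sub>R (P ** g ** matrix_inv P)"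
    using main_form by blast
  then show ?thesis using R_inf_from_form[OF SLG GLG] phi1 by blast
qed

end

lemma det_inv: assumes "det (x::real^2^2) \<noteq> 0" shows "det (matrix_inv x) * det x = 1"
  using minv_props(2)[of x] assms inv_iff_det by (metis det_I det_mul)

lemma SL2_sub: "SL2 \<subseteq> GL2" by (auto simp: SL2_def GL2_def inv_iff_det)

theorem theorem5p7:
  shows "top_R_infty_property SL2 \<and> top_R_infty_property GL2"
proof
  show "top_R_infty_property SL2"
    unfolding top_R_infty_property_def
  proof (intro allI impI)
    fix \<phi> assume a: "top_automorphism SL2 \<phi>"
    interpret autG SL2 \<phi>
    proof
      show "SL2 \<subseteq> SL2" by simp
      show "SL2 \<subseteq> GL2" by (rule SL2_sub)
      show "x ** y \<in> SL2" if "x \<in> SL2" "y \<in> SL2" for x y using that by (simp add: SL2_def det_mul)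
      show "matrix_inv x \<in> SL2" if "x \<in> SL2" for x using that det_inv[of x] by (simp add: SL2_def)
      show "top_automorphism SL2 \<phi>" by (rule a)
    qed
    show "R_infinite SL2 \<phi>" by (rule R_inf)
  qed
  show "top_R_infty_property GL2"
    unfolding top_R_infty_property_def
  proof (intro allI impI)
    fix \<phi> assume a: "top_automorphism GL2 \<phi>"
    interpret autG GL2 \<phi>
    proof
      show "SL2 \<subseteq> GL2" by (rule SL2_sub)
      show "GL2 \<subseteq> GL2" by simp
      show "x ** y \<in> GL2" if "x \<in> GL2" "y \<in> GL2" for x y using that by (simp add: GL2_def inv_iff_det det_mul)
      show "matrix_inv x \<in> GL2" if "x \<in> GL2" for x using that det_inv[of x] by (auto simp: GL2_def inv_iff_det)
      show "top_automorphism GL2 \<phi>" by (rule a)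
    qed
    show "R_infinite GL2 \<phi>" by (rule R_inf)
  qed
qed

end
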